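(* Let $n\ge 1$, let $\rho$ be an $n\times n$ correlation matrix, let $u=(u_1,\ldots,u_n)\in\mathbb{R}^n$ be arbitrary and let $\kappa\in\{0,1\}$. Define the $n\times n$ matrix $\hat\rho$ by \[ \hat{\rho}_{ij} = \begin{cases} \dfrac{\rho_{ij}+\kappa u_iu_j}{\sqrt{(1+u_i^2)(1+u_j^2)}}, & i\neq j,\\[2mm] 1, & i=j. \end{cases} \] Then $\hat\rho$ is a correlation matrix.
   Context: An $n\times n$ real matrix $C$ is called a correlation matrix if (i) $C$ is positive semi-definite, i.e. $v^T C v\ge 0$ for all $v\in\mathbb{R}^n$, and (ii) all diagonal entries equal one, $C_{ii}=1$ for $i=1,\ldots,n$. *)

theory Defs
  imports "HOL-Analysis.Analysis"
begin

definition correlation_matrix :: "real^'n^'n \<Rightarrow> bool" where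
  "correlation_matrix C \<longleftrightarrow>
     (\<forall>v :: real^'n. v \<bullet> (C *v v) \<ge> 0) \<and> (\<forall>i. C $ i $ i = 1)"

end

theory Submission
  imports Defs
begin

theorem lemma1:
  fixes \<rho> :: "real^'n^'n" and u :: "real^'n" and \<kappa> :: real
  assumes "correlation_matrix \<rho>"
    and "\<kappa> \<in> {0, 1}"
  shows "correlation_matrix (\<chi> i j. if i = j then 1
            else (\<rho> $ i $ j + \<kappa> * u $ i * u $ j) / sqrt ((1 + (u $ i)^2) * (1 + (u $ j)^2)))"
proof -
  define C where "C = (\<chi> i j. if i = j then 1
            else (\<rho> $ i $ j + \<kappa> * u $ i * u $ j) / sqrt ((1 + (u $ i)^2) * (1 + (u $ j)^2)))"
  define d where "d i = sqrt (1 + (u $ i)^2)" for i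
  have dpos: "d i > 0" for i unfolding d_def by (simp add: add_pos_nonneg)
  have dsq: "d i * d i = 1 + (u $ i)^2" for i unfolding d_def
    by (simp add: add_nonneg_nonneg)
  have rd: "\<rho> $ i $ i = 1" for i using assms(1) unfolding correlation_matrix_def by blast
  have psd: "w \<bullet> (\<rho> *v w) \<ge> 0" for w using assms(1) unfolding correlation_matrix_def by blast
  have k01: "0 \<le> \<kappa>" "\<kappa> \<le> 1" using assms(2) by auto
  have Cform: "C $ i $ j = (\<rho> $ i $ j + \<kappa> * u $ i * u $ j
        + (if i = j then (1 - \<kappa>) * (u $ i)^2 else 0)) / (d i * d j)" for i j
  proof (cases "i = j")
    case True
    have "1 + (u $ i)^2 > 0" by (simp add: add_pos_nonneg)
    then show ?thesis using True rd[of i] dsq[of i] dpos[of i]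
      by (simp add: C_def power2_eq_square algebra_simps)
  next
    case False
    then show ?thesis by (simp add: C_def d_def real_sqrt_mult)
  qed
  have "v \<bullet> (C *v v) \<ge> 0" for v
  proof -
    define w where "w = (\<chi> i. v $ i / d i)"
    have vw: "v $ i = w $ i * d i" for i using dpos[of i] by (simp add: w_def)
    have "v \<bullet> (C *v v) = (\<Sum>i\<in>UNIV. \<Sum>j\<in>UNIV. v $ i * C $ i $ j * v $ j)"
      by (simp add: inner_vec_def matrix_vector_mult_def sum_distrib_left mult.assoc)
    also have "\<dots> = (\<Sum>i\<in>UNIV. \<Sum>j\<in>UNIV. w $ i * \<rho> $ i $ j * w $ j
          + \<kappa> * ((w $ i * u $ i) * (w $ j * u $ j))
          + (if i = j then (1 - \<kappa>) * (u $ i)^2 * (w $ i)^2 else 0))"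
    proof (intro sum.cong refl)
      fix i j
      show "v $ i * C $ i $ j * v $ j = w $ i * \<rho> $ i $ j * w $ j
          + \<kappa> * ((w $ i * u $ i) * (w $ j * u $ j))
          + (if i = j then (1 - \<kappa>) * (u $ i)^2 * (w $ i)^2 else 0)"
        unfolding Cform vw using dpos[of i] dpos[of j]
        by (simp add: field_simps power2_eq_square)
    qed
    also have "\<dots> = w \<bullet> (\<rho> *v w) + \<kappa> * (\<Sum>i\<in>UNIV. w $ i * u $ i)^2
        + (\<Sum>i\<in>UNIV. (1 - \<kappa>) * (u $ i)^2 * (w $ i)^2)"
    proof -
      have a: "(\<Sum>i\<in>UNIV. \<Sum>j\<in>UNIV. w $ i * \<rho> $ i $ j * w $ j) = w \<bullet> (\<rho> *v w)"
        by (simp add: inner_vec_def matrix_vector_mult_def sum_distrib_left mult.assoc)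
      have b: "(\<Sum>i\<in>UNIV. \<Sum>j\<in>UNIV. \<kappa> * ((w $ i * u $ i) * (w $ j * u $ j)))
          = \<kappa> * (\<Sum>i\<in>UNIV. w $ i * u $ i)^2"
        by (simp add: power2_eq_square sum_product sum_distrib_left[symmetric])
      have c: "(\<Sum>i\<in>UNIV. \<Sum>j\<in>UNIV. (if i = j then (1 - \<kappa>) * (u $ i)^2 * (w $ i)^2 else 0::real))
          = (\<Sum>i\<in>UNIV. (1 - \<kappa>) * (u $ i)^2 * (w $ i)^2)"
        by (simp add: sum.delta)
      show ?thesis by (simp only: sum.distrib a b c)
    qed
    also have "\<dots> \<ge> 0"
      using psd[of w] k01 by (intro add_nonneg_nonneg sum_nonneg mult_nonneg_nonneg) auto
    finally show ?thesis .
  qed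
  moreover have "\<forall>i. C $ i $ i = 1" by (simp add: C_def)
  ultimately show ?thesis unfolding C_def[symmetric] correlation_matrix_def by blast
qed

end
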